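(* Let $\mathcal{A}_1=(Q,R_1,V_1,V_1',f_1)$ and $\mathcal{A}_2=(Q,R_2,V_2,V_2',f_2)$ be two stochastic CA with the same set of states, with explicit global functions $F_1,F_2$. If they are not deterministic and $S_{F_1}=S_{F_2}$, then $|R_1|$ and $|R_2|$ have a common prime factor, i.e. $\mathscr{PF}(\mathcal{A}_1)\cap\mathscr{PF}(\mathcal{A}_2)\neq\emptyset$.
   Context: A stochastic CA is $(Q,R,V,V',f)$ with $Q$ finite states, $R$ finite random symbols, $V=\{v_1,\dots,v_r\}$, $V'=\{v'_1,\dots,v'_{r'}\}$ finite subsets of $\mathbb{Z}$, $f:Q^r\times R^{r'}\to Q$; explicit global function $F(c,s)_z=f((c_{z+v_1},\dots,c_{z+v_r}),(s_{z+v'_1},\dots,s_{z+v'_{r'}}))$. It is deterministic if $f$ does not depend on its second argument. $\nu_R$ is the uniform Bernoulli measure on $R^{\mathbb{Z}}$; the stochastic global function $S_F:Q^{\mathbb{Z}}\to\mathcal{M}(Q^{\mathbb{Z}})$ is $S_F(c)([u]_z)=\nu_R(\{s: F(c,s)\in[u]_z\})$ for cylinders $[u]_z=\{c:c_{z+x}=u_x,0\le x<|u|\}$. $\mathscr{PF}(\mathcal{A})$ denotes the set of prime factors of $|R|$. *)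

theory Defs
  imports "HOL-Probability.Probability" "HOL-Computational_Algebra.Primes"
begin

text \<open>A stochastic CA (Q,R,V,V',f) is represented by: state type 'q (finite),
 random-symbol type 'r (finite), neighbourhoods V, V' as lists of distinct
 integers [v_1,...,v_r], and local rule f acting on lists of length r and r'.\<close>

definition stoch_ca :: "int list \<Rightarrow> int list \<Rightarrow> ('q list \<Rightarrow> 'r list \<Rightarrow> 'q) \<Rightarrow> bool" where
  "stoch_ca V V' f \<longleftrightarrow> distinct V \<and> distinct V'"

definition deterministic :: "int list \<Rightarrow> int list \<Rightarrow> ('q list \<Rightarrow> 'r list \<Rightarrow> 'q) \<Rightarrow> bool" where
  "deterministic V V' f \<longleftrightarrow>
     (\<forall>qs ss ss'. length qs = length V \<longrightarrow> length ss = length V' \<longrightarrow> length ss' = length V' \<longrightarrow>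
        f qs ss = f qs ss')"

definition global_fun :: "int list \<Rightarrow> int list \<Rightarrow> ('q list \<Rightarrow> 'r list \<Rightarrow> 'q)
    \<Rightarrow> (int \<Rightarrow> 'q) \<Rightarrow> (int \<Rightarrow> 'r) \<Rightarrow> (int \<Rightarrow> 'q)" where
  "global_fun V V' f c s = (\<lambda>z. f (map (\<lambda>v. c (z + v)) V) (map (\<lambda>v. s (z + v)) V'))"

definition cyl :: "'a list \<Rightarrow> int \<Rightarrow> (int \<Rightarrow> 'a) set" where
  "cyl u z = {c. \<forall>x < length u. c (z + int x) = u ! x}"

definition bernoulli_unif :: "(int \<Rightarrow> 'r::finite) measure" where
  "bernoulli_unif = PiM UNIV (\<lambda>_. measure_pmf (pmf_of_set (UNIV :: 'r set)))"

text \<open>Stochastic global function, evaluated on cylinders: S_F(c)([u]_z).\<close>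
definition stoch_global :: "((int \<Rightarrow> 'q) \<Rightarrow> (int \<Rightarrow> 'r::finite) \<Rightarrow> (int \<Rightarrow> 'q))
    \<Rightarrow> (int \<Rightarrow> 'q) \<Rightarrow> 'q list \<Rightarrow> int \<Rightarrow> real" where
  "stoch_global F c u z = measure bernoulli_unif {s \<in> space bernoulli_unif. F c s \<in> cyl u z}"

end

theory Submission
  imports Defs
begin

abbreviation "MU \<equiv> (\<lambda>_::int. measure_pmf (pmf_of_set (UNIV :: 'r::finite set)))"

lemma space_B: "space (bernoulli_unif :: (int \<Rightarrow> 'r::finite) measure) = UNIV"
  unfolding bernoulli_unif_def by (simp add: space_PiM PiE_def extensional_def)

lemma cyl_eq:
  fixes W :: "int list" and ws :: "'r::finite list"
  assumes "distinct W" "length ws = length W"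
  shows "{s. map s W = ws} = prod_emb UNIV MU (set W) (PiE (set W) (\<lambda>v. {the (map_of (zip W ws) v)}))"
proof -
  have "map s W = ws \<longleftrightarrow> (\<forall>v\<in>set W. s v = the (map_of (zip W ws) v))" for s :: "int \<Rightarrow> 'r"
  proof
    assume "map s W = ws"
    thus "\<forall>v\<in>set W. s v = the (map_of (zip W ws) v)"
      using assms by (auto simp: in_set_conv_nth map_of_zip_nth)
  next
    assume h: "\<forall>v\<in>set W. s v = the (map_of (zip W ws) v)"
    show "map s W = ws"
      by (rule nth_equalityI) (use assms h in \<open>auto simp: map_of_zip_nth\<close>)
  qed
  thus ?thesis by (auto simp: prod_emb_iff extensional_def PiE_iff)
qed

lemma cyl_measure:
  fixes W :: "int list" and ws :: "'r::finite list"
  assumes "distinct W" "length ws = length W"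
  shows "{s. map s W = ws} \<in> sets (bernoulli_unif :: (int \<Rightarrow> 'r) measure)"
    and "measure (bernoulli_unif :: (int \<Rightarrow> 'r) measure) {s. map s W = ws} = 1 / real CARD('r) ^ length W"
proof -
  note e = cyl_eq[OF assms]
  show "{s. map s W = ws} \<in> sets (bernoulli_unif :: (int \<Rightarrow> 'r) measure)"
    unfolding e bernoulli_unif_def by (rule sets_PiM_I) auto
  have "emeasure (bernoulli_unif :: (int \<Rightarrow> 'r) measure) {s. map s W = ws} =
     (\<Prod>v\<in>set W. emeasure (MU v) {the (map_of (zip W ws) v)})"
    unfolding e bernoulli_unif_def
    by (rule emeasure_PiM_emb) (auto intro: prob_space_measure_pmf)
  also have "\<dots> = (\<Prod>v\<in>set W. ennreal (1 / real CARD('r)))"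
    by (intro prod.cong refl) (simp add: measure_pmf.emeasure_eq_measure measure_pmf_single)
  also have "\<dots> = ennreal (1 / real CARD('r) ^ length W)"
    using assms by (simp add: distinct_card prod_ennreal power_one_over ennreal_power)
  finally show "measure (bernoulli_unif :: (int \<Rightarrow> 'r) measure) {s. map s W = ws} = 1 / real CARD('r) ^ length W"
    by (simp add: measure_def)
qed

lemma prob_B: "prob_space (bernoulli_unif :: (int \<Rightarrow> 'r::finite) measure)"
  unfolding bernoulli_unif_def by (rule prob_space_PiM) (rule prob_space_measure_pmf)

lemma event_measure:
  fixes W :: "int list" and P :: "'r::finite list set"
  assumes "distinct W"
  shows "measure (bernoulli_unif :: (int \<Rightarrow> 'r) measure) {s. map s W \<in> P}
     = real (card {ws. length ws = length W \<and> ws \<in> P}) / real CARD('r) ^ length W"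
proof -
  interpret prob_space "bernoulli_unif :: (int \<Rightarrow> 'r) measure" by (rule prob_B)
  define L where "L = {ws. length ws = length W \<and> ws \<in> P}"
  have fin: "finite L"
    by (rule finite_subset[OF _ finite_lists_length_eq[of "UNIV :: 'r set" "length W"]])
       (auto simp: L_def)
  have eq: "{s. map s W \<in> P} = (\<Union>ws\<in>L. {s. map s W = ws})"
    by (auto simp: L_def)
  have "measure (bernoulli_unif :: (int \<Rightarrow> 'r) measure) (\<Union>ws\<in>L. {s. map s W = ws})
     = (\<Sum>ws\<in>L. measure (bernoulli_unif :: (int \<Rightarrow> 'r) measure) {s. map s W = ws})"
    by (rule finite_measure_finite_Union)
       (use fin assms in \<open>auto simp: L_def disjoint_family_on_def intro: cyl_measure(1)\<close>)
  also have "\<dots> = (\<Sum>ws\<in>L. 1 / real CARD('r) ^ length W)"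
    by (intro sum.cong refl) (use assms in \<open>auto simp: L_def cyl_measure(2)\<close>)
  finally show ?thesis unfolding eq L_def by simp
qed

lemma card_lt:
  fixes W :: "int list" and P :: "'r::finite list set"
  assumes "ws \<notin> P" "length ws = length W"
  shows "card {ws. length ws = length W \<and> ws \<in> P} < CARD('r) ^ length W"
proof -
  have "{ws. length ws = length W \<and> ws \<in> P} \<subset> {xs. set xs \<subseteq> UNIV \<and> length xs = length W}"
    using assms by auto
  hence "card {ws. length ws = length W \<and> ws \<in> P} < card {xs. set xs \<subseteq> (UNIV::'r set) \<and> length xs = length W}"
    by (rule psubset_card_mono[OF finite_lists_length_eq[OF finite]])
  thus ?thesis using card_lists_length_eq[OF finite, of "UNIV::'r set" "length W"] by simp
qed

lemma card_pos:
  fixes W :: "int list" and P :: "'r::finite list set"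
  assumes "ws \<in> P" "length ws = length W"
  shows "card {ws. length ws = length W \<and> ws \<in> P} > 0"
proof -
  have "finite {ws. length ws = length W \<and> ws \<in> P}"
    by (rule finite_subset[OF _ finite_lists_length_eq[of "UNIV :: 'r set" "length W"]]) auto
  thus ?thesis using assms by (auto simp: card_gt_0_iff)
qed

theorem lemma2:
  fixes V1 V1' V2 V2' :: "int list"
    and f1 :: "'q::finite list \<Rightarrow> 'r1::finite list \<Rightarrow> 'q"
    and f2 :: "'q list \<Rightarrow> 'r2::finite list \<Rightarrow> 'q"
  assumes "stoch_ca V1 V1' f1" and "stoch_ca V2 V2' f2"
    and "\<not> deterministic V1 V1' f1" and "\<not> deterministic V2 V2' f2"
    and "stoch_global (global_fun V1 V1' f1) = stoch_global (global_fun V2 V2' f2)"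
  shows "prime_factors CARD('r1) \<inter> prime_factors CARD('r2) \<noteq> {}"
proof
  assume disj: "prime_factors CARD('r1) \<inter> prime_factors CARD('r2) = {}"
  have d1: "distinct V1" "distinct V1'" and d2: "distinct V2'"
    using assms(1,2) by (auto simp: stoch_ca_def)
  obtain qs ss ss' where l: "length qs = length V1" "length ss = length V1'" "length ss' = length V1'"
    and ne: "f1 qs ss \<noteq> f1 qs ss'"
    using assms(3) by (auto simp: deterministic_def)
  define c where "c = (\<lambda>z. case map_of (zip V1 qs) z of Some q \<Rightarrow> q | None \<Rightarrow> undefined)"
  have mc: "map c V1 = qs"
    by (rule nth_equalityI) (use l d1 in \<open>auto simp: c_def map_of_zip_nth\<close>)
  define q where "q = f1 qs ss"
  define P1 where "P1 = {ws. f1 qs ws = q}"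
  define P2 where "P2 = {ws. f2 (map c V2) ws = q}"
  define k1 where "k1 = card {ws. length ws = length V1' \<and> ws \<in> P1}"
  define k2 where "k2 = card {ws. length ws = length V2' \<and> ws \<in> P2}"
  have e1: "stoch_global (global_fun V1 V1' f1) c [q] 0 = real k1 / real CARD('r1) ^ length V1'"
  proof -
    have "{s \<in> space bernoulli_unif. global_fun V1 V1' f1 c s \<in> cyl [q] 0} = {s. map s V1' \<in> P1}"
      using mc by (auto simp: space_B cyl_def global_fun_def P1_def)
    thus ?thesis unfolding stoch_global_def k1_def by (simp add: event_measure[OF d1(2)])
  qed
  have e2: "stoch_global (global_fun V2 V2' f2) c [q] 0 = real k2 / real CARD('r2) ^ length V2'"
  proof -
    have "{s \<in> space bernoulli_unif. global_fun V2 V2' f2 c s \<in> cyl [q] 0} = {s. map s V2' \<in> P2}"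
      by (auto simp: space_B cyl_def global_fun_def P2_def)
    thus ?thesis unfolding stoch_global_def k2_def by (simp add: event_measure[OF d2])
  qed
  have k1lt: "k1 < CARD('r1) ^ length V1'"
    unfolding k1_def by (rule card_lt[of ss']) (use l ne in \<open>auto simp: P1_def q_def\<close>)
  have k1pos: "k1 > 0"
    unfolding k1_def by (rule card_pos[of ss]) (use l in \<open>auto simp: P1_def q_def\<close>)
  from e1 e2 assms(5) have "real k1 / real CARD('r1) ^ length V1' = real k2 / real CARD('r2) ^ length V2'"
    by metis
  hence "real k1 * real CARD('r2) ^ length V2' = real k2 * real CARD('r1) ^ length V1'"
    by (simp add: field_simps)
  hence eqn: "k1 * CARD('r2) ^ length V2' = k2 * CARD('r1) ^ length V1'"
    by (metis of_nat_eq_iff of_nat_mult of_nat_power)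
  have cop: "coprime CARD('r1) CARD('r2)"
  proof (rule ccontr)
    assume "\<not> coprime CARD('r1) CARD('r2)"
    hence "gcd CARD('r1) CARD('r2) \<noteq> 1" by (simp add: coprime_iff_gcd_eq_1)
    then obtain p where p: "prime p" "p dvd gcd CARD('r1) CARD('r2)"
      using prime_factor_nat by blast
    hence "p \<in> prime_factors CARD('r1) \<inter> prime_factors CARD('r2)"
      by (auto simp: in_prime_factors_iff)
    thus False using disj by blast
  qed
  hence "coprime (CARD('r1) ^ length V1') (CARD('r2) ^ length V2')" by simp
  moreover have "CARD('r1) ^ length V1' dvd k1 * CARD('r2) ^ length V2'"
    using eqn by simp
  ultimately have "CARD('r1) ^ length V1' dvd k1"
    using coprime_dvd_mult_left_iff by blast
  with k1pos k1lt show False using nat_dvd_not_less by blast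
qed
end
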